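(* Let $A$ and $B$ be rings, $f: A\to B$ a ring homomorphism and $J$ a proper ideal of $B$ such that $J\cap \mathrm{nil}(B)=(0)$. Then $A\bowtie^{f}J$ is an Armendariz ring if and only if $A$ is an Armendariz ring.
   Context: All rings are associative with identity (not necessarily commutative), ring homomorphisms are unital, and ideals are two-sided. $\mathrm{nil}(R)$ denotes the set of nilpotent elements of a ring $R$. For a ring homomorphism $f:A\to B$ and an ideal $J$ of $B$, the amalgamation is the subring $A\bowtie^{f}J=\{(a,f(a)+j)\mid a\in A,\ j\in J\}$ of $A\times B$. A ring $R$ is Armendariz if whenever $p(x)=\sum_{i=0}^n a_ix^i$ and $q(x)=\sum_{j=0}^m b_jx^j$ in $R[x]$ satisfy $p(x)q(x)=0$, then $a_ib_j=0$ for all $i,j$. *)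

theory Defs
  imports Main "HOL-Library.Product_Plus"
begin

instantiation prod :: (times, times) times
begin
definition times_prod_def: "x * y = (fst x * fst y, snd x * snd y)"
instance ..
end

instantiation prod :: (one, one) one
begin
definition one_prod_def: "1 = (1, 1)"
instance ..
end

instance prod :: (ring_1, ring_1) ring_1
  by standard (auto simp: times_prod_def one_prod_def zero_prod_def plus_prod_def
      algebra_simps prod_eq_iff)

definition ring_hom_1 :: "('a::ring_1 \<Rightarrow> 'b::ring_1) \<Rightarrow> bool" where
  "ring_hom_1 f \<longleftrightarrow> f 1 = 1 \<and> (\<forall>x y. f (x + y) = f x + f y) \<and> (\<forall>x y. f (x * y) = f x * f y)"

definition two_sided_ideal :: "'b::ring_1 set \<Rightarrow> bool" where
  "two_sided_ideal J \<longleftrightarrow> 0 \<in> J \<and> (\<forall>x\<in>J. \<forall>y\<in>J. x + y \<in> J) \<and> (\<forall>x\<in>J. - x \<in> J)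
     \<and> (\<forall>r x. x \<in> J \<longrightarrow> r * x \<in> J \<and> x * r \<in> J)"

definition nil :: "'a::ring_1 set" where
  "nil = {x. \<exists>n. x ^ n = 0}"

definition amalgamation :: "('a::ring_1 \<Rightarrow> 'b::ring_1) \<Rightarrow> 'b set \<Rightarrow> ('a \<times> 'b) set" where
  "amalgamation f J = {(a, f a + j) | a j. a \<in> UNIV \<and> j \<in> J}"

text \<open>Armendariz property for the subring S of a ring: polynomials
  p = sum a_i x^i (deg \<le> n) and q = sum b_j x^j (deg \<le> m) with coefficients in S,
  represented by coefficient sequences; pq = 0 means every coefficient
  sum_{i+j=k} a_i b_j of the product vanishes.\<close>
definition armendariz_on :: "'a::ring_1 set \<Rightarrow> bool" where
  "armendariz_on S \<longleftrightarrow>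
     (\<forall>(a::nat \<Rightarrow> 'a) (b::nat \<Rightarrow> 'a) n m.
        (\<forall>i. a i \<in> S) \<and> (\<forall>j. b j \<in> S) \<and> (\<forall>i>n. a i = 0) \<and> (\<forall>j>m. b j = 0) \<and>
        (\<forall>k. (\<Sum>i\<le>k. a i * b (k - i)) = 0)
        \<longrightarrow> (\<forall>i j. a i * b j = 0))"

end

theory Submission
  imports Defs
begin

lemma reduced_arm:
  fixes J :: "'b::ring_1 set" and al be :: "nat \<Rightarrow> 'b"
  assumes id: "\<And>x r. x \<in> J \<Longrightarrow> r * x \<in> J \<and> x * r \<in> J"
    and red: "\<And>x. x \<in> J \<Longrightarrow> x * x = 0 \<Longrightarrow> x = 0"
    and aJ: "\<And>i. al i \<in> J" and bJ: "\<And>j. be j \<in> J"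
    and s: "\<And>k. (\<Sum>i\<le>k. al i * be (k - i)) = 0"
  shows "al i * be j = 0"
proof -
  have comm: "y * x = 0" if "x \<in> J" "x * y = 0" for x y
  proof -
    have "(y * x) * (y * x) = y * (x * y) * x" by (simp add: mult.assoc)
    also have "\<dots> = 0" using that by simp
    finally show ?thesis using red id[OF that(1)] by blast
  qed
  have main: "\<forall>t\<le>k. al t * be (k - t) = 0" for k
  proof (induction k rule: less_induct)
    case (less k)
    note IHk = less.IH
    show ?case
    proof (intro allI impI)
      fix t assume "t \<le> k"
      then show "al t * be (k - t) = 0"
      proof (induction t rule: less_induct)
        case (less t)
        have z: "(\<Sum>i\<le>k. al i * be (k - i) * al t) = 0"
          using s[of k] by (simp add: sum_distrib_right[symmetric])
        have other: "(\<Sum>i\<in>{..k} - {t}. al i * be (k - i) * al t) = 0"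
        proof (rule sum.neutral, intro ballI)
          fix i assume i: "i \<in> {..k} - {t}"
          show "al i * be (k - i) * al t = 0"
          proof (cases "i < t")
            case True
            then show ?thesis using less.IH[of i] less.prems by simp
          next
            case False
            with i have it: "t < i" "i \<le> k" by auto
            have lt: "t + k - i < k" "t \<le> t + k - i" using it by auto
            have "al t * be ((t + k - i) - t) = 0"
              using IHk[OF lt(1)] lt(2) by blast
            moreover have "(t + k - i) - t = k - i" using it by simp
            ultimately have "al t * be (k - i) = 0" by simp
            then have "be (k - i) * al t = 0" using comm aJ by blast
            then show ?thesis by (simp add: mult.assoc)
          qed
        qed
        have "(\<Sum>i\<le>k. al i * be (k - i) * al t) = al t * be (k - t) * al t
              + (\<Sum>i\<in>{..k} - {t}. al i * be (k - i) * al t)"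
          using less.prems by (subst sum.remove[of _ t]) auto
        with z other have "al t * be (k - t) * al t = 0" by simp
        then have "(al t * be (k - t)) * (al t * be (k - t)) = 0"
          by (metis mult.assoc mult_zero_left)
        then show ?case using red id aJ by blast
      qed
    qed
  qed
  have "al i * be (i + j - i) = 0" using main[of "i + j"] le_add1 by blast
  then show ?thesis by simp
qed

lemma hom_sum:
  assumes "ring_hom_1 f"
  shows "f (sum g A) = (\<Sum>x\<in>A. f (g x))"
proof -
  have add: "\<And>x y. f (x + y) = f x + f y" using assms unfolding ring_hom_1_def by blast
  have f0: "f 0 = 0" using add[of 0 0] by simp
  show ?thesis
    by (induction A rule: infinite_finite_induct) (auto simp: f0 add)
qed

theorem theorem2p2:
  fixes f :: "'a::ring_1 \<Rightarrow> 'b::ring_1" and J :: "'b set"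
  assumes "ring_hom_1 f"
    and "two_sided_ideal J" and "J \<noteq> UNIV"
    and "J \<inter> nil = {0}"
  shows "armendariz_on (amalgamation f J) \<longleftrightarrow> armendariz_on (UNIV :: 'a set)"
proof -
  have add: "\<And>x y. f (x + y) = f x + f y" and mul: "\<And>x y. f (x * y) = f x * f y"
    using assms(1) unfolding ring_hom_1_def by blast+
  have f0: "f 0 = 0" using add[of 0 0] by simp
  have J0: "0 \<in> J" and Jadd: "\<And>x y. x \<in> J \<Longrightarrow> y \<in> J \<Longrightarrow> x + y \<in> J"
    and Jid: "\<And>x r. x \<in> J \<Longrightarrow> r * x \<in> J \<and> x * r \<in> J"
    using assms(2) unfolding two_sided_ideal_def by blast+
  have nilz: "\<And>x n. x \<in> J \<Longrightarrow> x ^ n = 0 \<Longrightarrow> x = 0"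
    using assms(4) unfolding nil_def by blast
  show ?thesis
  proof
    assume H: "armendariz_on (amalgamation f J)"
    show "armendariz_on (UNIV :: 'a set)"
      unfolding armendariz_on_def
    proof (intro allI impI)
      fix a b :: "nat \<Rightarrow> 'a" and n m i j
      assume h: "(\<forall>i. a i \<in> UNIV) \<and> (\<forall>j. b j \<in> UNIV) \<and> (\<forall>i>n. a i = 0) \<and> (\<forall>j>m. b j = 0) \<and>
        (\<forall>k. (\<Sum>i\<le>k. a i * b (k - i)) = 0)"
      define a' where "a' i = (a i, f (a i))" for i
      define b' where "b' i = (b i, f (b i))" for i
      have mem: "(x, f x) \<in> amalgamation f J" for x
        unfolding amalgamation_def using J0 by force
      have pm: "\<And>x y. (x, f x) * (y, f y) = (x * y, f (x * y))"
        by (simp add: times_prod_def mul)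
      have "a' i * b' j = 0"
      proof (rule H[unfolded armendariz_on_def, rule_format, of a' b' n m i j], intro conjI allI impI)
        show "a' i \<in> amalgamation f J" for i unfolding a'_def by (rule mem)
        show "b' i \<in> amalgamation f J" for i unfolding b'_def by (rule mem)
        show "a' i = 0" if "i > n" for i using h that f0 by (simp add: a'_def zero_prod_def)
        show "b' i = 0" if "i > m" for i using h that f0 by (simp add: b'_def zero_prod_def)
        show "(\<Sum>i\<le>k. a' i * b' (k - i)) = 0" for k
        proof -
          have "(\<Sum>i\<le>k. a' i * b' (k - i)) = (\<Sum>i\<le>k. (a i * b (k - i), f (a i * b (k - i))))"
            by (simp add: a'_def b'_def pm)
          also have "\<dots> = ((\<Sum>i\<le>k. a i * b (k - i)), f (\<Sum>i\<le>k. a i * b (k - i)))"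
            by (simp add: sum_prod hom_sum[OF assms(1)])
          also have "\<dots> = 0" using h f0 by (simp add: zero_prod_def)
          finally show ?thesis .
        qed
      qed
      then show "a i * b j = 0" by (simp add: a'_def b'_def pm zero_prod_def)
    qed
  next
    assume H: "armendariz_on (UNIV :: 'a set)"
    show "armendariz_on (amalgamation f J)"
      unfolding armendariz_on_def
    proof (intro allI impI)
      fix al be :: "nat \<Rightarrow> 'a \<times> 'b" and n m i0 j0
      assume h: "(\<forall>i. al i \<in> amalgamation f J) \<and> (\<forall>j. be j \<in> amalgamation f J) \<and> (\<forall>i>n. al i = 0) \<and> (\<forall>j>m. be j = 0) \<and>
        (\<forall>k. (\<Sum>i\<le>k. al i * be (k - i)) = 0)"
      have sumk: "(\<Sum>i\<le>k. al i * be (k - i)) = 0" for k using h by blast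
      have fstz: "fst (al i) * fst (be j) = 0" for i j
      proof (rule H[unfolded armendariz_on_def, rule_format, of "\<lambda>i. fst (al i)" "\<lambda>j. fst (be j)" n m i j], intro conjI allI impI)
        show "fst (al i) = 0" if "i > n" for i using h that by simp
        show "fst (be i) = 0" if "i > m" for i using h that by simp
        show "(\<Sum>i\<le>k. fst (al i) * fst (be (k - i))) = 0" for k
          using arg_cong[OF sumk[of k], of fst] by (simp add: fst_sum times_prod_def)
      qed auto
      have snds: "(\<Sum>i\<le>k. snd (al i) * snd (be (k - i))) = 0" for k
        using arg_cong[OF sumk[of k], of snd] by (simp add: snd_sum times_prod_def)
      have inJ: "snd (al i) * snd (be j) \<in> J" for i j
      proof -
        obtain a x where a: "al i = (a, f a + x)" "x \<in> J"
          using h unfolding amalgamation_def by blast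
        obtain b y where b: "be j = (b, f b + y)" "y \<in> J"
          using h unfolding amalgamation_def by blast
        have ab: "a * b = 0" using fstz[of i j] a b by simp
        have "snd (al i) * snd (be j) = f (a * b) + (f a * y + x * f b + x * y)"
          using a b by (simp add: mul algebra_simps)
        also have "\<dots> = f a * y + x * f b + x * y" using ab f0 by simp
        finally show ?thesis using Jadd Jid a b by metis
      qed
      define c where "c = snd (al i0) * snd (be j0)"
      have cJ: "c \<in> J" unfolding c_def by (rule inJ)
      have "(c * snd (al i0)) * (snd (be j0) * c) = 0"
      proof (rule reduced_arm[of J "\<lambda>i. c * snd (al i)" "\<lambda>j. snd (be j) * c"])
        show "\<And>x r. x \<in> J \<Longrightarrow> r * x \<in> J \<and> x * r \<in> J" by (rule Jid)
        show "\<And>x. x \<in> J \<Longrightarrow> x * x = 0 \<Longrightarrow> x = 0" using nilz[of _ 2] by (simp add: power2_eq_square)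
        show "\<And>i. c * snd (al i) \<in> J" using Jid cJ by blast
        show "\<And>j. snd (be j) * c \<in> J" using Jid cJ by blast
        show "(\<Sum>i\<le>k. c * snd (al i) * (snd (be (k - i)) * c)) = 0" for k
        proof -
          have "(\<Sum>i\<le>k. c * snd (al i) * (snd (be (k - i)) * c))
                = c * (\<Sum>i\<le>k. snd (al i) * snd (be (k - i))) * c"
            by (simp add: sum_distrib_left sum_distrib_right mult.assoc)
          then show ?thesis using snds by simp
        qed
      qed
      then have "c ^ 3 = 0" unfolding c_def by (simp add: power3_eq_cube mult.assoc)
      then have "c = 0" using nilz cJ by blast
      then show "al i0 * be j0 = 0"
        using fstz[of i0 j0] unfolding c_def by (simp add: times_prod_def zero_prod_def)
    qed
  qed
qed

end
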